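(* Let $X=(X_1,\dots,X_k)$ be a random vector with copula $C$ and marginal distribution functions $F_1,\dots,F_k$. Let $Z_1$ be a random variable independent of $X$ with distribution function $G$, let $Z=(Z_1,\dots,Z_1)\in\mathbb{R}^k$, and let $\tilde F_i$ be the distribution function of $X_i+Z_1$. Then the copula of $X+Z$ is $$C_4(u)=\int_{-\infty}^{\infty}C\big(F_1(\tilde F_1^{-1}(u_1)-t),\dots,F_k(\tilde F_k^{-1}(u_k)-t)\big)\,dG(t),$$ for $u=(u_1,\dots,u_k)\in[0,1]^k$.
   Context: A $k$-copula is a $k$-variate distribution function on $[0,1]^k$ with uniform marginals; the copula of a random vector is the copula given by Sklar's theorem. $\tilde F_i^{-1}$ denotes the inverse (quantile function) of $\tilde F_i$.
   Formalization: Each distribution function $\tilde F_i$ of $X_i+Z_1$ is assumed continuous, a hypothesis on which the copula formula $C_4$ is stated to hold. The statement above fails without it. *)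

theory Defs
  imports "HOL-Probability.Probability"
begin

definition unit_cube :: "(real ^ 'k) set" where
  "unit_cube = {u. \<forall>i. 0 \<le> u $ i \<and> u $ i \<le> 1}"

definition is_copula :: "(real ^ 'k \<Rightarrow> real) \<Rightarrow> bool" where
  "is_copula C \<longleftrightarrow> (\<exists>\<mu>. prob_space \<mu> \<and> sets \<mu> = sets (borel :: (real ^ 'k) measure) \<and>
      (\<forall>i. \<forall>a. 0 \<le> a \<and> a \<le> 1 \<longrightarrow> measure \<mu> {v. v $ i \<le> a} = a) \<and>
      (\<forall>u \<in> unit_cube. C u = measure \<mu> {v. \<forall>i. v $ i \<le> u $ i}))"

definition copula_of :: "'a measure \<Rightarrow> ('a \<Rightarrow> real ^ 'k) \<Rightarrow> (real ^ 'k \<Rightarrow> real) \<Rightarrow> bool" where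
  "copula_of M Y C \<longleftrightarrow> is_copula C \<and>
     (\<forall>x. measure M {\<omega> \<in> space M. \<forall>i. Y \<omega> $ i \<le> x $ i} =
          C (\<chi> i. measure M {\<omega> \<in> space M. Y \<omega> $ i \<le> x $ i}))"

text \<open>Quantile function (generalized inverse) F^{-1}(u) = inf {x. F x \<ge> u},
  valued in the extended reals (so F^{-1}(0) = -\<infinity>, and F^{-1}(u) = \<infinity> if F never reaches u).\<close>
definition quantile :: "(real \<Rightarrow> real) \<Rightarrow> real \<Rightarrow> ereal" where
  "quantile F u = Inf {ereal x | x. u \<le> F x}"

definition cdf_ext :: "(real \<Rightarrow> real) \<Rightarrow> ereal \<Rightarrow> real" where
  "cdf_ext F x = (if x = -\<infinity> then 0 else if x = \<infinity> then 1 else F (real_of_ereal x))"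

end

theory Submission
  imports Defs
begin

lemma meas_nth[measurable (raw)]:
  fixes f :: "'a \<Rightarrow> real ^ 'k"
  shows "f \<in> borel_measurable M \<Longrightarrow> (\<lambda>x. f x $ i) \<in> borel_measurable M"
  by (rule measurable_compose[OF _ borel_measurable_nth])

lemma vec_meas:
  fixes f :: "'a \<Rightarrow> real ^ 'k"
  assumes "\<And>i. (\<lambda>x. f x $ i) \<in> borel_measurable M"
  shows "f \<in> borel_measurable M"
  by (subst borel_measurable_euclidean_space) (auto simp: Basis_vec_def inner_axis assms)

locale rv1 =
  fixes M :: "'a measure" and W :: "'a \<Rightarrow> real" and H :: "real \<Rightarrow> real"
  assumes ps: "prob_space M" and Wm[measurable]: "W \<in> borel_measurable M"
    and Hdef: "\<And>x. H x = measure M {\<omega> \<in> space M. W \<omega> \<le> x}"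
    and Hcont: "\<And>x. isCont H x"
begin

interpretation prob_space M by (rule ps)

lemma H_cdf: "H = cdf (distr M borel W)"
proof
  fix x
  have "cdf (distr M borel W) x = measure M (W -` {..x} \<inter> space M)"
    by (simp add: cdf_def measure_distr)
  also have "W -` {..x} \<inter> space M = {\<omega> \<in> space M. W \<omega> \<le> x}" by auto
  finally show "H x = cdf (distr M borel W) x" by (simp add: Hdef)
qed

lemma RD: "real_distribution (distr M borel W)"
  by (rule real_distribution_distr) simp

lemma H_mono: "x \<le> y \<Longrightarrow> H x \<le> H y"
  unfolding H_cdf using RD real_distribution.finite_borel_measure_M
    finite_borel_measure.cdf_nondecreasing by blast

lemma H_top: "(H \<longlongrightarrow> 1) at_top"
  unfolding H_cdf using RD real_distribution.cdf_lim_at_top_prob by blast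

lemma H_bot: "(H \<longlongrightarrow> 0) at_bot"
  unfolding H_cdf using RD real_distribution.finite_borel_measure_M
    finite_borel_measure.cdf_lim_at_bot by blast

lemma H_meas[measurable]: "H \<in> borel_measurable borel"
  by (rule borel_measurable_continuous_onI) (simp add: Hcont continuous_at_imp_continuous_on)

lemma H_diff: "c \<le> s \<Longrightarrow> measure M {\<omega> \<in> space M. c < W \<omega> \<and> W \<omega> \<le> s} = H s - H c"
proof -
  assume "c \<le> s"
  have "{\<omega> \<in> space M. c < W \<omega> \<and> W \<omega> \<le> s} = {\<omega> \<in> space M. W \<omega> \<le> s} - {\<omega> \<in> space M. W \<omega> \<le> c}"
    by auto
  moreover have "measure M ({\<omega> \<in> space M. W \<omega> \<le> s} - {\<omega> \<in> space M. W \<omega> \<le> c}) = H s - H c"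
  proof (subst finite_measure_Diff)
    show "{\<omega> \<in> space M. W \<omega> \<le> s} \<in> sets M" by measurable
    show "{\<omega> \<in> space M. W \<omega> \<le> c} \<in> sets M" by measurable
    show "{\<omega> \<in> space M. W \<omega> \<le> c} \<subseteq> {\<omega> \<in> space M. W \<omega> \<le> s}"
      using \<open>c \<le> s\<close> by auto
  qed (simp add: Hdef)
  ultimately show ?thesis by simp
qed

lemma sup_lemma0:
  assumes ne: "{y. H y \<le> b} \<noteq> {}" and bd: "bdd_above {y. H y \<le> b}"
  shows "H (Sup {y. H y \<le> b}) \<le> b" and "\<And>y. H y \<le> b \<longleftrightarrow> y \<le> Sup {y. H y \<le> b}"
proof -
  have cl: "closed {y. H y \<le> b}"
    by (rule closed_Collect_le) (auto simp: Hcont continuous_at_imp_continuous_on)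
  from closed_contains_Sup[OF ne bd cl] show 1: "H (Sup {y. H y \<le> b}) \<le> b" by simp
  fix y show "H y \<le> b \<longleftrightarrow> y \<le> Sup {y. H y \<le> b}"
  proof
    assume "H y \<le> b" then show "y \<le> Sup {y. H y \<le> b}" using bd by (intro cSup_upper) auto
  next
    assume "y \<le> Sup {y. H y \<le> b}" then show "H y \<le> b" using 1 H_mono order_trans by blast
  qed
qed

lemma sup_lemma:
  assumes ne: "{y. H y \<le> b} \<noteq> {}" and bd: "bdd_above {y. H y \<le> b}"
  obtains s where "H s \<le> b" and "\<And>y. H y \<le> b \<longleftrightarrow> y \<le> s"
  using sup_lemma0[OF ne bd] by blast

lemma nullAE:
  assumes "N \<in> sets M" "measure M N = 0" "{x \<in> space M. \<not> P x} \<subseteq> N"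
  shows "AE x in M. P x"
  by (rule AE_I[OF assms(3) _ assms(1)]) (simp add: emeasure_eq_measure assms(2))

lemma all_le_imp_one:
  assumes "\<And>y. H y \<le> b" shows "1 \<le> b"
  by (rule tendsto_upperbound[OF H_top]) (auto simp: assms)

lemma N0: "AE \<omega> in M. c < W \<omega> \<longrightarrow> H c < H (W \<omega>)"
proof -
  let ?S = "{y. H y \<le> H c}"
  let ?N = "{\<omega> \<in> space M. c < W \<omega> \<and> H (W \<omega>) \<le> H c}"
  have Nm: "?N \<in> sets M" by measurable
  have "measure M ?N = 0"
  proof (cases "bdd_above ?S")
    case True
    have ne: "?S \<noteq> {}" by auto
    obtain s where s1: "H s \<le> H c" and s2: "\<And>y. H y \<le> H c \<longleftrightarrow> y \<le> s"
      using sup_lemma[OF ne True] by blast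
    have cs: "c \<le> s" using s2[of c] by simp
    have "H s = H c" using s1 H_mono[OF cs] by simp
    have "?N = {\<omega> \<in> space M. c < W \<omega> \<and> W \<omega> \<le> s}" using s2 by auto
    then show ?thesis using H_diff[OF cs] \<open>H s = H c\<close> by simp
  next
    case False
    have "\<And>y. H y \<le> H c"
    proof -
      fix y
      from False obtain z where "z \<in> ?S" "y < z" unfolding bdd_above_def
        by (meson not_le_imp_less)
      then show "H y \<le> H c" using H_mono[of y z] by simp
    qed
    then have "1 \<le> H c" by (rule all_le_imp_one)
    have Cm: "{\<omega> \<in> space M. W \<omega> \<le> c} \<in> sets M" by measurable
    have sub: "?N \<subseteq> space M - {\<omega> \<in> space M. W \<omega> \<le> c}" by auto
    have "measure M ?N \<le> measure M (space M - {\<omega> \<in> space M. W \<omega> \<le> c})"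
      by (rule finite_measure_mono[OF sub]) (use Cm in auto)
    also have "\<dots> = 1 - H c" using prob_compl[OF Cm] Hdef[of c] by simp
    finally show ?thesis using \<open>1 \<le> H c\<close> measure_nonneg[of M ?N] by linarith
  qed
  then show ?thesis by (intro nullAE[OF Nm]) auto
qed

lemma Hpos: "AE \<omega> in M. 0 < H (W \<omega>)"
proof (cases "{y. H y \<le> 0} = {}")
  case True then show ?thesis by (auto intro!: AE_I2 simp: set_eq_iff not_le)
next
  case False
  have bd: "bdd_above {y. H y \<le> 0}"
  proof (rule ccontr)
    assume nb: "\<not> bdd_above {y. H y \<le> 0}"
    have "\<And>y. H y \<le> 0"
    proof -
      fix y
      from nb obtain z where "z \<in> {y. H y \<le> 0}" "y < z" unfolding bdd_above_def
        by (meson not_le_imp_less)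
      then show "H y \<le> 0" using H_mono[of y z] by simp
    qed
    then have "1 \<le> (0::real)" by (rule all_le_imp_one)
    then show False by simp
  qed
  obtain s where s1: "H s \<le> 0" and s2: "\<And>y. H y \<le> 0 \<longleftrightarrow> y \<le> s"
    using sup_lemma[OF False bd] by blast
  let ?N = "{\<omega> \<in> space M. W \<omega> \<le> s}"
  have "measure M ?N = 0" using s1 Hdef[of s] measure_nonneg[of M ?N]
    by linarith
  moreover have "{x \<in> space M. \<not> 0 < H (W x)} \<subseteq> ?N" using s2 by (auto simp: not_less)
  ultimately show ?thesis by (intro nullAE[of ?N]) auto
qed

end
context rv1 begin
interpretation prob_space M by (rule ps)

lemma H_nonneg: "0 \<le> H x" by (simp add: Hdef)
lemma H_le1: "H x \<le> 1" by (simp add: Hdef)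

lemma quantile_eq: "quantile H u = Inf (ereal ` {x. u \<le> H x})"
  unfolding quantile_def by (rule arg_cong[where f=Inf]) auto

lemma Q_lower: "u \<le> H y \<Longrightarrow> quantile H u \<le> ereal y"
  unfolding quantile_eq by (rule Inf_lower) auto

lemma Qcases:
  assumes "0 \<le> u" "u \<le> 1"
  shows "(quantile H u = -\<infinity> \<and> u = 0) \<or> (\<exists>q. quantile H u = ereal q \<and> H q = u) \<or>
         (quantile H u = \<infinity> \<and> u = 1 \<and> (\<forall>x. H x < 1))"
proof -
  let ?T = "{x. u \<le> H x}"
  consider (e) "?T = {}" | (b) "?T \<noteq> {}" "bdd_below ?T" | (n) "?T \<noteq> {}" "\<not> bdd_below ?T" by argo
  then show ?thesis
  proof cases
    case e
    have hl: "H x < u" for x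
    proof -
      from e have "x \<notin> ?T" by simp
      then show "H x < u" by simp
    qed
    have "1 \<le> u" by (rule all_le_imp_one) (simp add: hl less_imp_le)
    then have "u = 1" using assms by simp
    moreover have "quantile H u = \<infinity>" unfolding quantile_eq e by (simp add: top_ereal_def)
    ultimately show ?thesis using hl by auto
  next
    case b
    let ?q = "Inf ?T"
    have eq: "quantile H u = ereal ?q" unfolding quantile_eq using ereal_Inf'[OF b(2) b(1)] by simp
    have cl: "closed ?T" by (rule closed_Collect_le) (auto simp: Hcont continuous_at_imp_continuous_on)
    have ge: "u \<le> H ?q" using closed_contains_Inf[OF b(1) b(2) cl] by simp
    have lt: "H y < u" if "y < ?q" for y
    proof (rule ccontr)
      assume "\<not> H y < u" then have "y \<in> ?T" by simp
      then have "?q \<le> y" using b(2) by (rule cInf_lower)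
      with \<open>y < ?q\<close> show False by simp
    qed
    have "H ?q \<le> u"
    proof (rule tendsto_upperbound)
      show "(H \<longlongrightarrow> H ?q) (at_left ?q)"
        using tendsto_within_subset[OF Hcont[of ?q, unfolded isCont_def] subset_UNIV] .
      show "\<forall>\<^sub>F x in at_left ?q. H x \<le> u"
        by (rule eventually_at_leftI[of "?q - 1"]) (auto intro!: less_imp_le[OF lt])
      show "at_left ?q \<noteq> bot" by simp
    qed
    then show ?thesis using eq ge by auto
  next
    case n
    have all: "\<exists>x\<in>?T. x \<le> y" for y
    proof -
      from n(2) have "\<not> (\<forall>x\<in>?T. y \<le> x)" unfolding bdd_below_def by blast
      then obtain x where "x \<in> ?T" "\<not> y \<le> x" by blast
      then show ?thesis by (intro bexI[of _ x]) auto
    qed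
    have "quantile H u = -\<infinity>" unfolding quantile_eq
    proof (rule ereal_bot)
      fix B
      obtain x where "x \<in> ?T" "x \<le> B" using all by blast
      then have "Inf (ereal ` ?T) \<le> ereal x" by (intro Inf_lower) auto
      also have "\<dots> \<le> ereal B" using \<open>x \<le> B\<close> by simp
      finally show "Inf (ereal ` ?T) \<le> ereal B" .
    qed
    moreover have "u \<le> 0"
    proof (rule tendsto_lowerbound[OF H_bot])
      show "\<forall>\<^sub>F x in at_bot. u \<le> H x"
      proof (rule always_eventually, rule allI)
        fix y obtain x where "x \<in> ?T" "x \<le> y" using all by blast
        then show "u \<le> H y" using H_mono[of x y] by simp
      qed
    qed simp
    ultimately show ?thesis using assms by simp
  qed
qed

lemma cdf_ext_Q: "0 \<le> u \<Longrightarrow> u \<le> 1 \<Longrightarrow> cdf_ext H (quantile H u) = u"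
  using Qcases[of u] by (auto simp: cdf_ext_def)

lemma P_ereal: "measure M {\<omega> \<in> space M. ereal (W \<omega>) \<le> y} = cdf_ext H y"
proof (cases y)
  case (real r) then show ?thesis by (simp add: cdf_ext_def Hdef)
next
  case PInf then show ?thesis by (simp add: cdf_ext_def prob_space)
next
  case MInf then show ?thesis by (simp add: cdf_ext_def)
qed

lemma N1:
  assumes "0 \<le> u" "u \<le> 1"
  shows "AE \<omega> in M. (H (W \<omega>) \<le> u \<longleftrightarrow> ereal (W \<omega>) \<le> quantile H u)"
proof -
  consider (m) "quantile H u = -\<infinity>" "u = 0" | (r) q where "quantile H u = ereal q" "H q = u"
    | (p) "quantile H u = \<infinity>" "u = 1" using Qcases[OF assms] by blast
  then show ?thesis
  proof cases
    case m
    show ?thesis using Hpos by eventually_elim (use m in auto)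
  next
    case r
    show ?thesis using N0[of q]
    proof eventually_elim
      case (elim \<omega>)
      show ?case using elim H_mono[of "W \<omega>" q] r by (cases "W \<omega> \<le> q") auto
    qed
  next
    case p
    show ?thesis using p by (intro AE_I2) (simp add: H_le1)
  qed
qed

lemma uniform:
  assumes "0 \<le> u" "u \<le> 1"
  shows "measure M {\<omega> \<in> space M. H (W \<omega>) \<le> u} = u"
proof -
  have "measure M {\<omega> \<in> space M. H (W \<omega>) \<le> u} = measure M {\<omega> \<in> space M. ereal (W \<omega>) \<le> quantile H u}"
  proof (rule measure_eq_AE)
    show "AE x in M. (x \<in> {\<omega> \<in> space M. H (W \<omega>) \<le> u}) = (x \<in> {\<omega> \<in> space M. ereal (W \<omega>) \<le> quantile H u})"
      using N1[OF assms] AE_space by eventually_elim simp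
    show "{\<omega> \<in> space M. H (W \<omega>) \<le> u} \<in> sets M" by measurable
    show "{\<omega> \<in> space M. ereal (W \<omega>) \<le> quantile H u} \<in> sets M" by measurable
  qed
  also have "\<dots> = u" by (simp add: P_ereal cdf_ext_Q assms)
  finally show ?thesis .
qed

lemma N2: "AE \<omega> in M. (W \<omega> \<le> x \<longleftrightarrow> H (W \<omega>) \<le> H x)"
  using N0[of x] by eventually_elim (meson H_mono not_le)

end
lemma copula_lip1:
  fixes C :: "real ^ 'k \<Rightarrow> real"
  assumes "is_copula C" "u \<in> unit_cube" "v \<in> unit_cube"
  shows "C u - C v \<le> (\<Sum>i\<in>UNIV. \<bar>u$i - v$i\<bar>)"
proof -
  obtain \<mu> :: "(real ^ 'k) measure" where pm: "prob_space \<mu>" and sm: "sets \<mu> = sets borel"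
    and marg: "\<And>i a. 0 \<le> a \<Longrightarrow> a \<le> 1 \<Longrightarrow> measure \<mu> {w. w $ i \<le> a} = a"
    and Cd: "\<And>u. u \<in> unit_cube \<Longrightarrow> C u = measure \<mu> {w. \<forall>i. w $ i \<le> u $ i}"
    using assms(1) unfolding is_copula_def by blast
  interpret P: prob_space \<mu> by (rule pm)
  note [measurable_cong] = sm
  have sp: "space \<mu> = UNIV" using sets_eq_imp_space_eq[OF sm] by simp
  let ?A = "{w. \<forall>i. w $ i \<le> u $ i}" and ?B = "{w. \<forall>i. w $ i \<le> v $ i}"
  let ?D = "\<lambda>i. {w. v $ i < w $ i \<and> w $ i \<le> u $ i}"
  have mA: "?A \<in> sets \<mu>" and mB: "?B \<in> sets \<mu>" and mD: "\<And>i. ?D i \<in> sets \<mu>" by measurable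
  have mU: "(\<Union>i\<in>UNIV. ?D i) \<in> sets \<mu>" by measurable
  have "?A \<subseteq> ?B \<union> (\<Union>i\<in>UNIV. ?D i)" by (auto simp: not_le)
  then have "measure \<mu> ?A \<le> measure \<mu> (?B \<union> (\<Union>i\<in>UNIV. ?D i))"
    by (intro P.finite_measure_mono) (use mB mU in auto)
  also have "\<dots> \<le> measure \<mu> ?B + measure \<mu> (\<Union>i\<in>UNIV. ?D i)"
    by (intro measure_Un_le mB mU)
  also have "measure \<mu> (\<Union>i\<in>UNIV. ?D i) \<le> (\<Sum>i\<in>UNIV. measure \<mu> (?D i))"
    by (intro measure_subadditive_finite) (use mD P.emeasure_finite in auto)
  also have "(\<Sum>i\<in>UNIV. measure \<mu> (?D i)) \<le> (\<Sum>i\<in>UNIV. \<bar>u$i - v$i\<bar>)"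
  proof (rule sum_mono)
    fix i :: 'k
    show "measure \<mu> (?D i) \<le> \<bar>u$i - v$i\<bar>"
    proof (cases "u $ i \<le> v $ i")
      case True
      then have "?D i = {}" by auto
      then show ?thesis by (metis abs_ge_zero measure_empty)
    next
      case False
      have m1: "{w. w $ i \<le> u $ i} \<in> sets \<mu>" and m2: "{w. w $ i \<le> v $ i} \<in> sets \<mu>" by measurable
      have "?D i = {w. w $ i \<le> u $ i} - {w. w $ i \<le> v $ i}" by auto
      then have "measure \<mu> (?D i) = measure \<mu> {w. w $ i \<le> u $ i} - measure \<mu> {w. w $ i \<le> v $ i}"
        using False by (simp add: P.finite_measure_Diff[OF m1 m2] subset_eq)
      also have "\<dots> = u $ i - v $ i"
        using assms(2,3) by (simp add: marg unit_cube_def)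
      finally show ?thesis by simp
    qed
  qed
  finally show ?thesis using assms(2,3) by (simp add: Cd)
qed

lemma copula_lip:
  fixes C :: "real ^ 'k \<Rightarrow> real"
  assumes "is_copula C" "u \<in> unit_cube" "v \<in> unit_cube"
  shows "\<bar>C u - C v\<bar> \<le> (\<Sum>i\<in>UNIV. \<bar>u$i - v$i\<bar>)"
  using copula_lip1[OF assms] copula_lip1[OF assms(1,3,2)] by (simp add: abs_minus_commute)

lemma copula_tendsto:
  fixes C :: "real ^ 'k \<Rightarrow> real"
  assumes "is_copula C" "\<And>n. a n \<in> unit_cube" "b \<in> unit_cube"
    and "\<And>i. (\<lambda>n. a n $ i) \<longlonglongrightarrow> b $ i"
  shows "(\<lambda>n. C (a n)) \<longlonglongrightarrow> C b"
proof -
  have "(\<lambda>n. C (a n) - C b) \<longlonglongrightarrow> 0"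
  proof (rule Lim_null_comparison)
    show "\<forall>\<^sub>F n in sequentially. norm (C (a n) - C b) \<le> (\<Sum>i\<in>UNIV. \<bar>a n $ i - b $ i\<bar>)"
      using copula_lip[OF assms(1) assms(2) assms(3)] by simp
    have "(\<lambda>n. \<Sum>i\<in>UNIV. \<bar>a n $ i - b $ i\<bar>) \<longlonglongrightarrow> (\<Sum>i\<in>(UNIV::'k set). \<bar>b $ i - b $ i\<bar>)"
      by (intro tendsto_sum tendsto_rabs tendsto_diff assms(4) tendsto_const)
    then show "(\<lambda>n. \<Sum>i\<in>UNIV. \<bar>a n $ i - b $ i\<bar>) \<longlonglongrightarrow> 0" by simp
  qed
  then show ?thesis by (rule LIM_zero_cancel)
qed

lemma cdf_lims:
  assumes "prob_space M" "V \<in> borel_measurable M"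
  shows "(\<lambda>n. measure M {\<omega> \<in> space M. V \<omega> \<le> real n}) \<longlonglongrightarrow> 1"
    and "(\<lambda>n. measure M {\<omega> \<in> space M. V \<omega> \<le> - real n}) \<longlonglongrightarrow> 0"
proof -
  interpret prob_space M by fact
  have RD: "real_distribution (distr M borel V)" using assms(2) by (intro real_distribution_distr) simp
  have eq: "cdf (distr M borel V) x = measure M {\<omega> \<in> space M. V \<omega> \<le> x}" for x
  proof -
    have "cdf (distr M borel V) x = measure M (V -` {..x} \<inter> space M)"
      using assms(2) by (simp add: cdf_def measure_distr)
    also have "V -` {..x} \<inter> space M = {\<omega> \<in> space M. V \<omega> \<le> x}" by auto
    finally show ?thesis .
  qed
  show "(\<lambda>n. measure M {\<omega> \<in> space M. V \<omega> \<le> real n}) \<longlonglongrightarrow> 1"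
    using real_distribution.cdf_lim_infty_prob[OF RD] by (simp add: eq)
  show "(\<lambda>n. measure M {\<omega> \<in> space M. V \<omega> \<le> - real n}) \<longlonglongrightarrow> 0"
    using finite_borel_measure.cdf_lim_neg_infty[OF real_distribution.finite_borel_measure_M[OF RD]]
    by (simp add: eq)
qed
lemma lemmaE:
  fixes M :: "'a measure" and X :: "'a \<Rightarrow> real ^ 'k" and C :: "real ^ 'k \<Rightarrow> real"
    and F :: "'k \<Rightarrow> real \<Rightarrow> real" and y :: "'k \<Rightarrow> ereal"
  assumes ps: "prob_space M" and Xm[measurable]: "X \<in> borel_measurable M"
    and cop: "copula_of M X C"
    and Fd: "\<And>i x. F i x = measure M {\<omega> \<in> space M. X \<omega> $ i \<le> x}"
  shows "measure M {\<omega> \<in> space M. \<forall>i. ereal (X \<omega> $ i) \<le> y i} = C (\<chi> i. cdf_ext (F i) (y i))"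
proof -
  interpret prob_space M by (rule ps)
  have isC: "is_copula C"
    and cd: "\<And>x. measure M {\<omega> \<in> space M. \<forall>i. X \<omega> $ i \<le> x $ i} = C (\<chi> i. measure M {\<omega> \<in> space M. X \<omega> $ i \<le> x $ i})"
    using cop unfolding copula_of_def by auto
  define xn where "xn n i = (if y i = \<infinity> then real n else if y i = -\<infinity> then - real n else real_of_ereal (y i))"
    for n :: nat and i
  let ?A = "\<lambda>n. {\<omega> \<in> space M. \<forall>i. X \<omega> $ i \<le> xn n i}"
  let ?B = "{\<omega> \<in> space M. \<forall>i. ereal (X \<omega> $ i) \<le> y i}"
  have eqn: "measure M (?A n) = C (\<chi> i. F i (xn n i))" for n
    using cd[of "\<chi> i. xn n i"] by (simp add: Fd)
  have mA: "?A n \<in> sets M" for n by measurable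
  have mB: "?B \<in> sets M" by measurable
  have ev: "\<forall>\<^sub>F n in sequentially. (X \<omega> $ i \<le> xn n i) = (ereal (X \<omega> $ i) \<le> y i)" for \<omega> i
  proof (cases "y i")
    case (real r) then show ?thesis by (simp add: xn_def)
  next
    case PInf
    show ?thesis unfolding eventually_sequentially
    proof (rule exI[of _ "nat \<lceil>X \<omega> $ i\<rceil>"], intro allI impI)
      fix n assume "nat \<lceil>X \<omega> $ i\<rceil> \<le> n"
      then have "real (nat \<lceil>X \<omega> $ i\<rceil>) \<le> real n" by (simp only: of_nat_le_iff)
      then have "X \<omega> $ i \<le> real n" using real_nat_ceiling_ge[of "X \<omega> $ i"] by linarith
      then show "(X \<omega> $ i \<le> xn n i) = (ereal (X \<omega> $ i) \<le> y i)" by (simp add: xn_def PInf)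
    qed
  next
    case MInf
    show ?thesis unfolding eventually_sequentially
    proof (rule exI[of _ "nat \<lceil>- X \<omega> $ i\<rceil> + 1"], intro allI impI)
      fix n assume "nat \<lceil>- X \<omega> $ i\<rceil> + 1 \<le> n"
      then have "real (nat \<lceil>- X \<omega> $ i\<rceil> + 1) \<le> real n" by (simp only: of_nat_le_iff)
      then have "- X \<omega> $ i < real n" using real_nat_ceiling_ge[of "- X \<omega> $ i"] by simp
      then show "(X \<omega> $ i \<le> xn n i) = (ereal (X \<omega> $ i) \<le> y i)" by (simp add: xn_def MInf)
    qed
  qed
  have lim1: "(\<lambda>n. measure M (?A n)) \<longlonglongrightarrow> measure M ?B"
  proof -
    have "(\<lambda>n. integral\<^sup>L M (indicator (?A n) :: 'a \<Rightarrow> real)) \<longlonglongrightarrow> integral\<^sup>L M (indicator ?B)"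
    proof (rule integral_dominated_convergence[where w="\<lambda>_. 1"])
      show "indicator ?B \<in> borel_measurable M" using mB by simp
      show "\<And>n. indicator (?A n) \<in> borel_measurable M" using mA by simp
      show "integrable M (\<lambda>_. 1::real)" by simp
      show "AE x in M. (\<lambda>n. indicator (?A n) x) \<longlonglongrightarrow> (indicator ?B x :: real)"
      proof (rule AE_I2)
        fix \<omega> assume \<omega>: "\<omega> \<in> space M"
        have "\<forall>\<^sub>F n in sequentially. \<forall>i. (X \<omega> $ i \<le> xn n i) = (ereal (X \<omega> $ i) \<le> y i)"
          by (rule eventually_all_finite) (rule ev)
        then have "\<forall>\<^sub>F n in sequentially. indicator (?A n) \<omega> = (indicator ?B \<omega> :: real)"
          by eventually_elim (use \<omega> in \<open>simp add: indicator_def\<close>)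
        then show "(\<lambda>n. indicator (?A n) \<omega>) \<longlonglongrightarrow> (indicator ?B \<omega> :: real)" by (rule tendsto_eventually)
      qed
      show "\<And>n. AE x in M. norm (indicator (?A n) x :: real) \<le> 1"
        by (intro AE_I2) (simp add: indicator_def)
    qed
    moreover have "?A n \<inter> space M = ?A n" for n by auto
    moreover have "?B \<inter> space M = ?B" by auto
    ultimately show ?thesis by simp
  qed
  have cube_a: "(\<chi> i. F i (xn n i)) \<in> unit_cube" for n by (simp add: unit_cube_def Fd)
  have cube_b: "(\<chi> i. cdf_ext (F i) (y i)) \<in> unit_cube" by (simp add: unit_cube_def cdf_ext_def Fd)
  have lim2: "(\<lambda>n. C (\<chi> i. F i (xn n i))) \<longlonglongrightarrow> C (\<chi> i. cdf_ext (F i) (y i))"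
  proof (rule copula_tendsto[OF isC cube_a cube_b])
    fix i
    have mi: "(\<lambda>\<omega>. X \<omega> $ i) \<in> borel_measurable M" by measurable
    show "(\<lambda>n. (\<chi> i. F i (xn n i)) $ i) \<longlonglongrightarrow> (\<chi> i. cdf_ext (F i) (y i)) $ i"
    proof (cases "y i")
      case (real r) then show ?thesis by (simp add: xn_def cdf_ext_def)
    next
      case PInf then show ?thesis
        using cdf_lims(1)[OF ps mi] by (simp add: xn_def cdf_ext_def Fd)
    next
      case MInf then show ?thesis
        using cdf_lims(2)[OF ps mi] by (simp add: xn_def cdf_ext_def Fd)
    qed
  qed
  from lim1 have "(\<lambda>n. C (\<chi> i. F i (xn n i))) \<longlonglongrightarrow> measure M ?B" by (simp add: eqn)
  from LIMSEQ_unique[OF this lim2] show ?thesis .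
qed
lemma ereal_shift: "(ereal (a + t) \<le> y) = (ereal a \<le> y - ereal t)"
  by (cases y) auto

lemma distr_interval:
  assumes ps: "prob_space M" and Zm: "Z1 \<in> borel_measurable M"
    and Gd: "\<And>x. G x = measure M {\<omega> \<in> space M. Z1 \<omega> \<le> x}"
  shows "distr M borel Z1 = interval_measure G"
proof -
  interpret prob_space M by (rule ps)
  have RD: "real_distribution (distr M borel Z1)" using Zm by (intro real_distribution_distr) simp
  have eq: "cdf (distr M borel Z1) = G"
  proof
    fix x
    have "cdf (distr M borel Z1) x = measure M (Z1 -` {..x} \<inter> space M)"
      using Zm by (simp add: cdf_def measure_distr)
    also have "Z1 -` {..x} \<inter> space M = {\<omega> \<in> space M. Z1 \<omega> \<le> x}" by auto
    finally show "cdf (distr M borel Z1) x = G x" by (simp add: Gd)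
  qed
  have FB: "finite_borel_measure (distr M borel Z1)" using RD real_distribution.finite_borel_measure_M by blast
  have mono: "\<And>x y. x \<le> y \<Longrightarrow> G x \<le> G y"
    using finite_borel_measure.cdf_nondecreasing[OF FB] by (simp add: eq)
  have rc: "\<And>a. continuous (at_right a) G"
    using finite_borel_measure.cdf_is_right_cont[OF FB] by (simp add: eq)
  have bot: "(G \<longlongrightarrow> 0) at_bot"
    using finite_borel_measure.cdf_lim_at_bot[OF FB] by (simp add: eq)
  have top: "(G \<longlongrightarrow> 1) at_top"
    using real_distribution.cdf_lim_at_top_prob[OF RD] by (simp add: eq)
  have RI: "real_distribution (interval_measure G)"
    by (rule real_distribution_interval_measure[OF mono rc bot top])
  have "cdf (interval_measure G) = G" by (rule cdf_interval_measure[OF mono rc bot])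
  then show ?thesis using cdf_unique[OF RD RI] eq by simp
qed

lemma fubini_step:
  fixes M :: "'a measure" and X :: "'a \<Rightarrow> real ^ 'k" and Z1 :: "'a \<Rightarrow> real" and y :: "'k \<Rightarrow> ereal"
  assumes ps: "prob_space M" and Xm[measurable]: "X \<in> borel_measurable M"
    and Zm[measurable]: "Z1 \<in> borel_measurable M"
    and ind: "\<And>A B. A \<in> sets (borel :: (real ^ 'k) measure) \<Longrightarrow> B \<in> sets (borel :: real measure) \<Longrightarrow>
        measure M {\<omega> \<in> space M. X \<omega> \<in> A \<and> Z1 \<omega> \<in> B} =
        measure M {\<omega> \<in> space M. X \<omega> \<in> A} * measure M {\<omega> \<in> space M. Z1 \<omega> \<in> B}"
  shows "measure M {\<omega> \<in> space M. \<forall>i. ereal (X \<omega> $ i + Z1 \<omega>) \<le> y i} =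
         (\<integral>t. measure M {\<omega> \<in> space M. \<forall>i. ereal (X \<omega> $ i) \<le> y i - ereal t} \<partial>(distr M borel Z1))"
proof -
  interpret prob_space M by (rule ps)
  let ?MX = "distr M borel X" and ?MZ = "distr M borel Z1"
  interpret PX: prob_space ?MX by (rule prob_space_distr) simp
  interpret PZ: prob_space ?MZ by (rule prob_space_distr) simp
  let ?J = "distr M (borel \<Otimes>\<^sub>M borel) (\<lambda>\<omega>. (Z1 \<omega>, X \<omega>))"
  have sJ: "sets (?MZ \<Otimes>\<^sub>M ?MX) = sets (borel \<Otimes>\<^sub>M borel)"
    by (intro sets_pair_measure_cong) simp_all
  have joint: "?MZ \<Otimes>\<^sub>M ?MX = ?J"
  proof (rule pair_measure_eqI)
    show "sigma_finite_measure ?MZ" by unfold_locales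
    show "sigma_finite_measure ?MX" by unfold_locales
    show "sets (?MZ \<Otimes>\<^sub>M ?MX) = sets ?J" using sJ by simp
    fix A B assume A: "A \<in> sets ?MZ" and B: "B \<in> sets ?MX"
    then have A': "A \<in> sets borel" and B': "B \<in> sets borel" by simp_all
    have e1: "emeasure ?MZ A = ennreal (measure M {\<omega> \<in> space M. Z1 \<omega> \<in> A})"
      using A' by (simp add: emeasure_distr emeasure_eq_measure vimage_def Int_def conj_commute)
    have e2: "emeasure ?MX B = ennreal (measure M {\<omega> \<in> space M. X \<omega> \<in> B})"
      using B' by (simp add: emeasure_distr emeasure_eq_measure vimage_def Int_def conj_commute)
    have e3: "emeasure ?J (A \<times> B) = ennreal (measure M {\<omega> \<in> space M. X \<omega> \<in> B \<and> Z1 \<omega> \<in> A})"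
    proof -
      have "emeasure ?J (A \<times> B) = emeasure M ((\<lambda>\<omega>. (Z1 \<omega>, X \<omega>)) -` (A \<times> B) \<inter> space M)"
        using A' B' by (intro emeasure_distr) auto
      also have "(\<lambda>\<omega>. (Z1 \<omega>, X \<omega>)) -` (A \<times> B) \<inter> space M = {\<omega> \<in> space M. X \<omega> \<in> B \<and> Z1 \<omega> \<in> A}"
        by auto
      finally show ?thesis by (simp add: emeasure_eq_measure)
    qed
    show "emeasure ?MZ A * emeasure ?MX B = emeasure ?J (A \<times> B)"
      unfolding e1 e2 e3 ind[OF B' A'] by (simp add: ennreal_mult' mult.commute)
  qed
  define S where "S = {p :: real \<times> (real ^ 'k). \<forall>i. ereal (snd p $ i + fst p) \<le> y i}"
  have "Measurable.pred (borel \<Otimes>\<^sub>M borel) (\<lambda>p::real \<times> (real^'k). \<forall>i. ereal (snd p $ i + fst p) \<le> y i)"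
    by measurable
  from predE[OF this] have Sm: "S \<in> sets (borel \<Otimes>\<^sub>M borel)" unfolding S_def by (simp add: space_pair_measure)
  then have Sm': "S \<in> sets (?MZ \<Otimes>\<^sub>M ?MX)" using sJ by simp
  define f where "f t = measure M {\<omega> \<in> space M. \<forall>i. ereal (X \<omega> $ i) \<le> y i - ereal t}" for t
  have slice: "emeasure ?MX (Pair t -` S) = ennreal (f t)" for t
  proof -
    have "Pair t -` S \<in> sets borel" using Sm' by (metis PX.measurable_emeasure_Pair sets_Pair1 sets_distr)
    then have "emeasure ?MX (Pair t -` S) = emeasure M (X -` (Pair t -` S) \<inter> space M)"
      by (intro emeasure_distr) auto
    also have "X -` (Pair t -` S) \<inter> space M = {\<omega> \<in> space M. \<forall>i. ereal (X \<omega> $ i) \<le> y i - ereal t}"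
      by (auto simp: S_def ereal_shift)
    finally show ?thesis by (simp add: emeasure_eq_measure f_def)
  qed
  have fm: "f \<in> borel_measurable ?MZ"
  proof -
    have "(\<lambda>t. enn2real (emeasure ?MX (Pair t -` S))) \<in> borel_measurable ?MZ"
      using PX.measurable_emeasure_Pair[OF Sm'] by measurable
    moreover have "(\<lambda>t. enn2real (emeasure ?MX (Pair t -` S))) = f"
      by (simp add: slice fun_eq_iff f_def)
    ultimately show ?thesis by simp
  qed
  have fint: "integrable ?MZ f"
  proof (rule PZ.integrable_const_bound[where B=1])
    show "AE x in ?MZ. norm (f x) \<le> 1" by (simp add: f_def)
    show "f \<in> borel_measurable ?MZ" by (rule fm)
  qed
  have "emeasure M {\<omega> \<in> space M. \<forall>i. ereal (X \<omega> $ i + Z1 \<omega>) \<le> y i} = emeasure ?J S"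
  proof -
    have "emeasure ?J S = emeasure M ((\<lambda>\<omega>. (Z1 \<omega>, X \<omega>)) -` S \<inter> space M)"
      using Sm by (intro emeasure_distr) auto
    also have "(\<lambda>\<omega>. (Z1 \<omega>, X \<omega>)) -` S \<inter> space M = {\<omega> \<in> space M. \<forall>i. ereal (X \<omega> $ i + Z1 \<omega>) \<le> y i}"
      by (auto simp: S_def)
    finally show ?thesis by simp
  qed
  also have "\<dots> = emeasure (?MZ \<Otimes>\<^sub>M ?MX) S" by (simp add: joint)
  also have "\<dots> = (\<integral>\<^sup>+t. emeasure ?MX (Pair t -` S) \<partial>?MZ)"
    by (rule PX.emeasure_pair_measure_alt[OF Sm'])
  also have "\<dots> = (\<integral>\<^sup>+t. ennreal (f t) \<partial>?MZ)" by (simp add: slice)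
  also have "\<dots> = ennreal (integral\<^sup>L ?MZ f)"
    by (rule nn_integral_eq_integral[OF fint]) (simp add: f_def)
  finally have "emeasure M {\<omega> \<in> space M. \<forall>i. ereal (X \<omega> $ i + Z1 \<omega>) \<le> y i} = ennreal (integral\<^sup>L ?MZ f)" .
  moreover have "0 \<le> integral\<^sup>L ?MZ f" by (rule integral_nonneg_AE) (simp add: f_def)
  ultimately show ?thesis by (simp add: emeasure_eq_measure f_def[abs_def])
qed
theorem mainTheorem7:
  fixes M :: "'a measure" and X :: "'a \<Rightarrow> real ^ 'k" and Z1 :: "'a \<Rightarrow> real"
    and C :: "real ^ 'k \<Rightarrow> real" and F Ft :: "'k \<Rightarrow> real \<Rightarrow> real" and G :: "real \<Rightarrow> real"
  assumes "prob_space M"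
    and "X \<in> borel_measurable M" and "Z1 \<in> borel_measurable M"
    and "\<And>A B. A \<in> sets (borel :: (real ^ 'k) measure) \<Longrightarrow> B \<in> sets (borel :: real measure) \<Longrightarrow>
        measure M {\<omega> \<in> space M. X \<omega> \<in> A \<and> Z1 \<omega> \<in> B} =
        measure M {\<omega> \<in> space M. X \<omega> \<in> A} * measure M {\<omega> \<in> space M. Z1 \<omega> \<in> B}"
    and "copula_of M X C"
    and "\<And>i x. F i x = measure M {\<omega> \<in> space M. X \<omega> $ i \<le> x}"
    and "\<And>x. G x = measure M {\<omega> \<in> space M. Z1 \<omega> \<le> x}"
    and "\<And>i x. Ft i x = measure M {\<omega> \<in> space M. X \<omega> $ i + Z1 \<omega> \<le> x}"
    and "\<And>i x. isCont (Ft i) x"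
  shows "copula_of M (\<lambda>\<omega>. X \<omega> + (\<chi> i. Z1 \<omega>))
           (\<lambda>u. \<integral>t. C (\<chi> i. cdf_ext (F i) (quantile (Ft i) (u $ i) - ereal t)) \<partial>(interval_measure G))"
proof -
  interpret prob_space M by (rule assms(1))
  note Xm[measurable] = assms(2) and Zm[measurable] = assms(3)
  define W where "W i \<omega> = X \<omega> $ i + Z1 \<omega>" for i \<omega>
  have Wm[measurable]: "W i \<in> borel_measurable M" for i unfolding W_def by measurable
  have R: "rv1 M (W i) (Ft i)" for i
    by unfold_locales (simp_all add: W_def assms)
  have Ftm[measurable]: "Ft i \<in> borel_measurable borel" for i using rv1.H_meas[OF R] .
  let ?C4 = "\<lambda>u. \<integral>t. C (\<chi> i. cdf_ext (F i) (quantile (Ft i) (u $ i) - ereal t)) \<partial>(interval_measure G)"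
  have IG: "distr M borel Z1 = interval_measure G" by (rule distr_interval[OF assms(1) assms(3) assms(7)])
  have K: "measure M {\<omega> \<in> space M. \<forall>i. Ft i (W i \<omega>) \<le> u $ i} = ?C4 u" if u: "u \<in> unit_cube" for u
  proof -
    let ?q = "\<lambda>i. quantile (Ft i) (u $ i)"
    have u0: "0 \<le> u $ i" and u1: "u $ i \<le> 1" for i using u by (auto simp: unit_cube_def)
    have "measure M {\<omega> \<in> space M. \<forall>i. Ft i (W i \<omega>) \<le> u $ i} =
          measure M {\<omega> \<in> space M. \<forall>i. ereal (W i \<omega>) \<le> ?q i}"
    proof (rule measure_eq_AE)
      have "AE \<omega> in M. \<forall>i\<in>UNIV. (Ft i (W i \<omega>) \<le> u $ i \<longleftrightarrow> ereal (W i \<omega>) \<le> ?q i)"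
        by (rule AE_finite_allI) (simp_all add: rv1.N1[OF R u0 u1])
      then show "AE \<omega> in M. (\<omega> \<in> {\<omega> \<in> space M. \<forall>i. Ft i (W i \<omega>) \<le> u $ i}) =
          (\<omega> \<in> {\<omega> \<in> space M. \<forall>i. ereal (W i \<omega>) \<le> ?q i})"
        using AE_space by eventually_elim auto
      show "{\<omega> \<in> space M. \<forall>i. Ft i (W i \<omega>) \<le> u $ i} \<in> sets M" by measurable
      show "{\<omega> \<in> space M. \<forall>i. ereal (W i \<omega>) \<le> ?q i} \<in> sets M" by measurable
    qed
    also have "\<dots> = (\<integral>t. measure M {\<omega> \<in> space M. \<forall>i. ereal (X \<omega> $ i) \<le> ?q i - ereal t} \<partial>(distr M borel Z1))"
      unfolding W_def by (rule fubini_step[OF assms(1-4)])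
    also have "\<dots> = ?C4 u"
      unfolding IG by (rule Bochner_Integration.integral_cong[OF refl]) (rule lemmaE[OF assms(1,2,5,6)])
    finally show ?thesis .
  qed
  define V where "V \<omega> = (\<chi> i. Ft i (W i \<omega>))" for \<omega>
  have Vm: "V \<in> borel_measurable M" unfolding V_def by (rule vec_meas) simp
  let ?\<mu> = "distr M borel V"
  have marg: "measure ?\<mu> {v. v $ i \<le> a} = a" if "0 \<le> a" "a \<le> 1" for i a
  proof -
    have "measure ?\<mu> {v. v $ i \<le> a} = measure M (V -` {v. v $ i \<le> a} \<inter> space M)"
      by (rule measure_distr[OF Vm]) measurable
    also have "V -` {v. v $ i \<le> a} \<inter> space M = {\<omega> \<in> space M. Ft i (W i \<omega>) \<le> a}"
      by (auto simp: V_def)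
    finally show ?thesis using rv1.uniform[OF R that] by simp
  qed
  have cube: "?C4 u = measure ?\<mu> {v. \<forall>i. v $ i \<le> u $ i}" if "u \<in> unit_cube" for u
  proof -
    have "measure ?\<mu> {v. \<forall>i. v $ i \<le> u $ i} = measure M (V -` {v. \<forall>i. v $ i \<le> u $ i} \<inter> space M)"
      by (rule measure_distr[OF Vm]) measurable
    also have "V -` {v. \<forall>i. v $ i \<le> u $ i} \<inter> space M = {\<omega> \<in> space M. \<forall>i. Ft i (W i \<omega>) \<le> u $ i}"
      by (auto simp: V_def)
    finally show ?thesis using K[OF that] by simp
  qed
  have isC4: "is_copula ?C4"
    unfolding is_copula_def
    apply (rule exI[of _ ?\<mu>])
    using prob_space_distr[OF Vm] marg cube by auto
  have cdfeq: "measure M {\<omega> \<in> space M. \<forall>i. (X \<omega> + (\<chi> i. Z1 \<omega>)) $ i \<le> x $ i} =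
      ?C4 (\<chi> i. measure M {\<omega> \<in> space M. (X \<omega> + (\<chi> i. Z1 \<omega>)) $ i \<le> x $ i})" for x
  proof -
    have e1: "(X \<omega> + (\<chi> i. Z1 \<omega>)) $ i = W i \<omega>" for \<omega> i by (simp add: W_def)
    let ?u = "\<chi> i. Ft i (x $ i)"
    have u: "?u \<in> unit_cube" using rv1.H_nonneg[OF R] rv1.H_le1[OF R] by (simp add: unit_cube_def)
    have e2: "(\<chi> i. measure M {\<omega> \<in> space M. W i \<omega> \<le> x $ i}) = ?u"
      by (simp add: assms(8) W_def)
    have "measure M {\<omega> \<in> space M. \<forall>i. W i \<omega> \<le> x $ i} = measure M {\<omega> \<in> space M. \<forall>i. Ft i (W i \<omega>) \<le> ?u $ i}"
    proof (rule measure_eq_AE)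
      have "AE \<omega> in M. \<forall>i\<in>UNIV. (W i \<omega> \<le> x $ i \<longleftrightarrow> Ft i (W i \<omega>) \<le> Ft i (x $ i))"
        by (rule AE_finite_allI) (simp_all add: rv1.N2[OF R])
      then show "AE \<omega> in M. (\<omega> \<in> {\<omega> \<in> space M. \<forall>i. W i \<omega> \<le> x $ i}) =
          (\<omega> \<in> {\<omega> \<in> space M. \<forall>i. Ft i (W i \<omega>) \<le> ?u $ i})"
        using AE_space by eventually_elim auto
      show "{\<omega> \<in> space M. \<forall>i. W i \<omega> \<le> x $ i} \<in> sets M" by measurable
      show "{\<omega> \<in> space M. \<forall>i. Ft i (W i \<omega>) \<le> ?u $ i} \<in> sets M" by measurable
    qed
    also have "\<dots> = ?C4 ?u" by (rule K[OF u])
    finally show ?thesis unfolding e1 e2 .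
  qed
  show ?thesis unfolding copula_of_def using isC4 cdfeq by blast
qed

end
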